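(* Let $s\in(1/2,1)$, $\gamma\in(1,2s)$ and $A\subset(0,\gamma)$ finite. Let $B\subset\mathbb{R}^{1+d}$ be a half-parabolic ball, $U:B\times B\to\mathbb{R}$ a germ with $[U]_{\gamma;B}<\infty$, and let $\nu:B\to\mathbb{R}^d$, $\nu(x):=\nabla_{y_{1:d}}U(x,y)|_{y=x}$ (the vector at which the infimum in the definition of $[U]_{\gamma;B}$ is attained). Let $\Lambda:B\times B\to\mathbb{R}^d$ be a germ such that $[U]_{\gamma\text{-3pt};B}<\infty$ with respect to $\Lambda$ and $A$, and consider the germ $(\nu-\Lambda)(x,y):=\nu(y)-\nu(x)-\Lambda(x,y)$. Then $$[\nu-\Lambda]_{\gamma-1;B}\lesssim[U]_{\gamma\text{-3pt};B}+[U]_{\gamma;B},$$ with implicit constant depending only on $\gamma$ and $A$.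
   Context: Points of $\mathbb{R}^{1+d}$ are $x=(x_0,x_{1:d})$. Metric $d(x,y):=\max\{|x_0-y_0|^{1/(2s)},|x_{1:d}-y_{1:d}|\}$. Half-parabolic ball $B_r(x):=(x_0-r^{2s},x_0]\times B_r(x_{1:d})$. $w\cdot(y-x):=w\cdot(y_{1:d}-x_{1:d})$. For a (scalar or vector valued) germ $G$ and $\alpha\in(0,2s)\setminus\{1\}$: $[G]_{\alpha;B}:=\sup_{x\in B}\inf_{\nu\in\mathbb{R}^d}\sup_{y\in B,y_0\le x_0}|G(x,y)-G(x,x)-\mathbb{1}_{\alpha>1}\nu\cdot(y-x)|/d(x,y)^\alpha$ (for $\alpha<1$ no $\nu$ term). $[U]_{\gamma\text{-3pt};B}$ is the smallest $C$ with $|U(x,z)-U(x,y)-U(y,z)+U(y,y)+\Lambda(x,y)\cdot(z-y)|\le C\sum_{\beta\in A}d(x,y)^\beta d(y,z)^{\gamma-\beta}$ for all $x,y,z\in B$ with $z_0\le y_0\le x_0$. *)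

theory Defs
  imports "HOL-Analysis.Analysis" "HOL-Library.Extended_Real" "HOL-Library.Function_Algebras"
begin

text \<open>Points of R^(1+d) are pairs (x_0, x_{1:d}); the spatial part is a function
  nat => real vanishing at indices >= d, so that the dimension d is an ordinary
  natural-number parameter that can be quantified inside the statement.\<close>

type_synonym pt = "real \<times> (nat \<Rightarrow> real)"

definition Rd :: "nat \<Rightarrow> (nat \<Rightarrow> real) set" where
  "Rd d = {v. \<forall>i\<ge>d. v i = 0}"

definition Pts :: "nat \<Rightarrow> pt set" where
  "Pts d = UNIV \<times> Rd d"

definition dotd :: "nat \<Rightarrow> (nat \<Rightarrow> real) \<Rightarrow> (nat \<Rightarrow> real) \<Rightarrow> real" where
  "dotd d u v = (\<Sum>i<d. u i * v i)"

definition normd :: "nat \<Rightarrow> (nat \<Rightarrow> real) \<Rightarrow> real" where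
  "normd d v = sqrt (dotd d v v)"

definition pdist :: "real \<Rightarrow> nat \<Rightarrow> pt \<Rightarrow> pt \<Rightarrow> real" where
  "pdist s d x y = max (\<bar>fst x - fst y\<bar> powr (1 / (2 * s))) (normd d (snd x - snd y))"

definition hball :: "real \<Rightarrow> nat \<Rightarrow> real \<Rightarrow> pt \<Rightarrow> pt set" where
  "hball s d r x = {y \<in> Pts d. fst x - r powr (2 * s) < fst y \<and> fst y \<le> fst x
                               \<and> normd d (snd y - snd x) < r}"

definition germ_sn :: "real \<Rightarrow> nat \<Rightarrow> real \<Rightarrow> pt set \<Rightarrow> (pt \<Rightarrow> pt \<Rightarrow> real) \<Rightarrow> ereal" where
  "germ_sn s d \<alpha> B G =
     (SUP x\<in>B. INF \<nu>\<in>Rd d. SUP y\<in>{y \<in> B. fst y \<le> fst x}.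
        ereal (\<bar>G x y - G x x - (if \<alpha> > 1 then dotd d \<nu> (snd y - snd x) else 0)\<bar>
               / pdist s d x y powr \<alpha>))"

definition vgerm_sn :: "real \<Rightarrow> nat \<Rightarrow> real \<Rightarrow> pt set \<Rightarrow> (pt \<Rightarrow> pt \<Rightarrow> (nat \<Rightarrow> real)) \<Rightarrow> ereal" where
  "vgerm_sn s d \<alpha> B G =
     (SUP x\<in>B. SUP y\<in>{y \<in> B. fst y \<le> fst x}.
        ereal (normd d (G x y - G x x) / pdist s d x y powr \<alpha>))"

text \<open>[U]_{gamma-3pt;B} w.r.t. Lambda and A: the smallest C (infinity if none).\<close>
definition three_pt_sn :: "real \<Rightarrow> nat \<Rightarrow> real \<Rightarrow> real set \<Rightarrow> pt set
      \<Rightarrow> (pt \<Rightarrow> pt \<Rightarrow> real) \<Rightarrow> (pt \<Rightarrow> pt \<Rightarrow> (nat \<Rightarrow> real)) \<Rightarrow> ereal" where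
  "three_pt_sn s d \<gamma> A B U \<Lambda> =
     Inf {ereal C | C. 0 \<le> C \<and> (\<forall>x\<in>B. \<forall>y\<in>B. \<forall>z\<in>B. fst z \<le> fst y \<and> fst y \<le> fst x \<longrightarrow>
        \<bar>U x z - U x y - U y z + U y y + dotd d (\<Lambda> x y) (snd z - snd y)\<bar>
          \<le> C * (\<Sum>\<beta>\<in>A. pdist s d x y powr \<beta> * pdist s d y z powr (\<gamma> - \<beta>)))}"

text \<open>nu is the spatial gradient of y |-> U(x,y) at y = x (Frechet differentiability
  in the spatial variables, written out).\<close>
definition spatial_grad :: "nat \<Rightarrow> (pt \<Rightarrow> pt \<Rightarrow> real) \<Rightarrow> pt \<Rightarrow> (nat \<Rightarrow> real) \<Rightarrow> bool" where
  "spatial_grad d U x w \<longleftrightarrow> w \<in> Rd d \<and>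
     (\<forall>\<epsilon>>0. \<exists>\<delta>>0. \<forall>h\<in>Rd d. normd d h < \<delta> \<longrightarrow>
        \<bar>U x (fst x, snd x + h) - U x x - dotd d w h\<bar> \<le> \<epsilon> * normd d h)"

end

theory Submission
  imports Defs
begin

lemma normd_L2: "normd d v = L2_set v {..<d}"
  unfolding normd_def dotd_def L2_set_def by (simp add: power2_eq_square)

lemma normd_nonneg: "0 \<le> normd d v"
  by (simp add: normd_L2)

lemma normd_add: "normd d (u + v) \<le> normd d u + normd d v"
  unfolding normd_L2 using L2_set_triangle_ineq[of u v "{..<d}"] by (simp add: plus_fun_def)

lemma normd_scale: "normd d (\<lambda>i. c * v i) = \<bar>c\<bar> * normd d v"
proof -
  have "normd d (\<lambda>i. c * v i) = normd d (\<lambda>i. \<bar>c\<bar> * v i)"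
    unfolding normd_def dotd_def by (intro arg_cong[where f=sqrt] sum.cong) (auto simp: abs_mult_self_eq)
  also have "\<dots> = \<bar>c\<bar> * normd d v" unfolding normd_L2 by (simp add: L2_set_right_distrib)
  finally show ?thesis .
qed

lemma normd_minus_commute: "normd d (u - v) = normd d (v - u)"
  unfolding normd_def dotd_def by (intro arg_cong[where f=sqrt] sum.cong) (auto simp: algebra_simps)

lemma normd_diff: "normd d (u - v) \<le> normd d u + normd d v"
proof -
  have "normd d (u - v) = normd d (u + (\<lambda>i. (-1) * v i))"
    unfolding normd_def dotd_def by (intro arg_cong[where f=sqrt] sum.cong) auto
  also have "\<dots> \<le> normd d u + normd d v" using normd_add[of d u "(\<lambda>i. (-1) * v i)"] normd_scale[of d "-1" v] by simp
  finally show ?thesis .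
qed

lemma dotd_cs: "\<bar>dotd d u v\<bar> \<le> normd d u * normd d v"
proof -
  have "\<bar>dotd d u v\<bar> \<le> (\<Sum>i<d. \<bar>u i\<bar> * \<bar>v i\<bar>)"
    unfolding dotd_def by (rule order_trans[OF sum_abs]) (simp add: abs_mult)
  also have "\<dots> \<le> normd d u * normd d v" unfolding normd_L2 by (rule L2_set_mult_ineq)
  finally show ?thesis .
qed

lemma dotd_self: "dotd d v v = (normd d v)^2"
  unfolding normd_def by (simp add: dotd_def sum_nonneg)

lemma dotd_add_right: "dotd d u (v + w) = dotd d u v + dotd d u w"
  unfolding dotd_def by (simp add: algebra_simps sum.distrib)
lemma dotd_diff_right: "dotd d u (v - w) = dotd d u v - dotd d u w"
  unfolding dotd_def by (simp add: algebra_simps sum_subtractf)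
lemma dotd_diff_left: "dotd d (u - w) v = dotd d u v - dotd d w v"
  unfolding dotd_def by (simp add: algebra_simps sum_subtractf)
lemma dotd_add_left: "dotd d (u + w) v = dotd d u v + dotd d w v"
  unfolding dotd_def by (simp add: algebra_simps sum.distrib)
lemma dotd_scale_right: "dotd d u (\<lambda>i. c * v i) = c * dotd d u v"
  unfolding dotd_def by (simp add: algebra_simps sum_distrib_left)
lemma dotd_zero_norm: "normd d u = 0 \<Longrightarrow> dotd d u v = 0"
  using dotd_cs[of d u v] by simp

lemma Rd_add: "u \<in> Rd d \<Longrightarrow> v \<in> Rd d \<Longrightarrow> u + v \<in> Rd d"
  unfolding Rd_def by auto
lemma Rd_diff: "u \<in> Rd d \<Longrightarrow> v \<in> Rd d \<Longrightarrow> u - v \<in> Rd d"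
  unfolding Rd_def by auto
lemma Rd_scale: "v \<in> Rd d \<Longrightarrow> (\<lambda>i. c * v i) \<in> Rd d"
  unfolding Rd_def by auto

lemma pdist_nonneg: "0 \<le> pdist s d x y"
  unfolding pdist_def by (simp add: normd_nonneg le_max_iff_disj)

lemma pdist_same_time: "pdist s d y (fst y, snd y + h) = normd d h"
proof -
  have e: "snd y - (snd y + h) = (\<lambda>i. (-1) * h i)" by (simp add: fun_eq_iff)
  have "normd d (snd y - (snd y + h)) = normd d h"
    unfolding e normd_scale by simp
  then show ?thesis unfolding pdist_def using normd_nonneg[of d h] by simp
qed

lemma pdist_self: "pdist s d x x = 0"
  unfolding pdist_def normd_def dotd_def by simp

lemma pdist_zero_eq:
  assumes "x \<in> Pts d" "y \<in> Pts d" "pdist s d x y = 0" shows "x = y"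
proof -
  have a0: "0 \<le> \<bar>fst x - fst y\<bar> powr (1 / (2 * s))" by simp
  have b0: "0 \<le> normd d (snd x - snd y)" by (rule normd_nonneg)
  have m: "max (\<bar>fst x - fst y\<bar> powr (1 / (2 * s))) (normd d (snd x - snd y)) = 0"
    using assms(3) unfolding pdist_def .
  have n: "normd d (snd x - snd y) = 0"
    using m a0 b0 by (simp add: max_def split: if_splits)
  have t: "\<bar>fst x - fst y\<bar> powr (1 / (2 * s)) = 0"
    using m a0 b0 by (simp add: max_def split: if_splits)
  have "fst x = fst y" using t by simp
  moreover have "snd x i = snd y i" for i
  proof (cases "i < d")
    case True
    then show ?thesis using n unfolding normd_L2 by (simp add: L2_set_eq_0_iff)
  next
    case False
    then show ?thesis using assms(1,2) unfolding Pts_def Rd_def by auto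
  qed
  ultimately show ?thesis by (simp add: prod_eq_iff fun_eq_iff)
qed

lemma hball_iff: "z \<in> hball s d r x0 \<longleftrightarrow> snd z \<in> Rd d \<and> fst x0 - r powr (2 * s) < fst z \<and> fst z \<le> fst x0
      \<and> normd d (snd z - snd x0) < r"
  unfolding hball_def Pts_def by (auto simp: mem_Times_iff)
lemma eps_limit:
  fixes a K P :: real
  assumes "\<And>\<epsilon>. \<epsilon> > 0 \<Longrightarrow> a \<le> (K + \<epsilon>) * P" "0 \<le> P"
  shows "a \<le> K * P"
proof (cases "P = 0")
  case True
  then show ?thesis using assms(1)[of 1] by simp
next
  case False
  then have P: "P > 0" using assms(2) by simp
  have "a / P \<le> K"
  proof (rule field_le_epsilon)
    fix e :: real assume "0 < e"
    then show "a / P \<le> K + e" using assms(1)[of e] P by (simp add: pos_divide_le_eq)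
  qed
  then show ?thesis using P by (simp add: pos_divide_le_eq)
qed

lemma grad_unique:
  assumes xB: "x \<in> hball s d r x0" and g: "spatial_grad d U x w" and v': "\<nu>' \<in> Rd d"
    and \<gamma>: "1 < \<gamma>" and M: "0 \<le> M"
    and bd: "\<And>h. h \<in> Rd d \<Longrightarrow> normd d (snd x + h - snd x0) < r \<Longrightarrow>
       \<bar>U x (fst x, snd x + h) - U x x - dotd d \<nu>' h\<bar> \<le> M * normd d h powr \<gamma>"
  shows "normd d (w - \<nu>') = 0"
proof (rule ccontr)
  define D where "D = w - \<nu>'"
  define n where "n = normd d D"
  assume "normd d (w - \<nu>') \<noteq> 0"
  then have n: "n > 0" using normd_nonneg[of d D] unfolding n_def D_def by simp
  from g have wR: "w \<in> Rd d" and gall: "\<forall>\<epsilon>>0. \<exists>\<delta>>0. \<forall>h\<in>Rd d. normd d h < \<delta> \<longrightarrow>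
        \<bar>U x (fst x, snd x + h) - U x x - dotd d w h\<bar> \<le> \<epsilon> * normd d h"
    unfolding spatial_grad_def by auto
  have "\<exists>\<delta>>0. \<forall>h\<in>Rd d. normd d h < \<delta> \<longrightarrow>
        \<bar>U x (fst x, snd x + h) - U x x - dotd d w h\<bar> \<le> (n/2) * normd d h"
    by (rule gall[rule_format]) (simp add: n)
  then obtain \<delta> where \<delta>: "\<delta> > 0" and \<delta>h': "\<forall>h\<in>Rd d. normd d h < \<delta> \<longrightarrow>
        \<bar>U x (fst x, snd x + h) - U x x - dotd d w h\<bar> \<le> (n/2) * normd d h"
    by blast
  have \<delta>h: "\<And>h. h \<in> Rd d \<Longrightarrow> normd d h < \<delta> \<Longrightarrow>
        \<bar>U x (fst x, snd x + h) - U x x - dotd d w h\<bar> \<le> (n/2) * normd d h"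
    using \<delta>h' by blast
  define room where "room = r - normd d (snd x - snd x0)"
  have room: "room > 0" using xB unfolding room_def hball_iff by simp
  define c where "c = n / (2 * (M + 1))"
  have c: "c > 0" using n M by (simp add: c_def)
  define q where "q = c powr (1 / (\<gamma> - 1))"
  have q: "q > 0" using c by (simp add: q_def)
  have qc: "q powr (\<gamma> - 1) = c" using c \<gamma> by (simp add: q_def powr_powr)
  define u where "u = min (min (\<delta>/2) (room/2)) (q/2)"
  have u: "u > 0" "u < \<delta>" "u < room" "u < q" using \<delta> room q by (auto simp: u_def)
  have uc: "u powr (\<gamma> - 1) < c" using u(1,4) \<gamma> qc powr_less_mono2[of "\<gamma> - 1" u q] by simp
  define t where "t = u / n"
  define h where "h = (\<lambda>i. t * D i)"
  have DR: "D \<in> Rd d" using wR v' unfolding D_def by (rule Rd_diff)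
  have hR: "h \<in> Rd d" unfolding h_def using DR by (rule Rd_scale)
  have nh: "normd d h = u" unfolding h_def normd_scale using n u by (simp add: t_def n_def)
  have "normd d (snd x + h - snd x0) \<le> normd d (snd x - snd x0) + normd d h"
  proof -
    have eq: "snd x + h - snd x0 = (snd x - snd x0) + h" by (simp add: fun_eq_iff)
    show ?thesis unfolding eq by (rule normd_add)
  qed
  then have inb: "normd d (snd x + h - snd x0) < r" using nh u unfolding room_def by simp
  have b1: "\<bar>U x (fst x, snd x + h) - U x x - dotd d w h\<bar> \<le> (n/2) * u"
    using \<delta>h[OF hR] nh u by simp
  have b2: "\<bar>U x (fst x, snd x + h) - U x x - dotd d \<nu>' h\<bar> \<le> M * u powr \<gamma>"
    using bd[OF hR inb] nh by simp
  have "dotd d D h = t * n^2" unfolding h_def dotd_scale_right dotd_self n_def ..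
  also have "\<dots> = u * n" using n by (simp add: t_def power2_eq_square)
  finally have Dh: "dotd d D h = u * n" .
  have "dotd d D h = dotd d w h - dotd d \<nu>' h" unfolding D_def dotd_diff_left ..
  then have "u * n \<le> (n/2) * u + M * u powr \<gamma>" using b1 b2 Dh by linarith
  moreover have "u powr \<gamma> = u * u powr (\<gamma> - 1)"
  proof -
    have "u powr \<gamma> = u powr (1 + (\<gamma> - 1))" by simp
    also have "\<dots> = u powr 1 * u powr (\<gamma> - 1)" by (rule powr_add)
    also have "\<dots> = u * u powr (\<gamma> - 1)" using u by simp
    finally show ?thesis .
  qed
  ultimately have "u * (n/2) \<le> u * (M * u powr (\<gamma> - 1))"
  proof -
    assume a1: "u * n \<le> (n/2) * u + M * u powr \<gamma>" and a2: "u powr \<gamma> = u * u powr (\<gamma> - 1)"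
    have "u * (M * u powr (\<gamma> - 1)) = M * u powr \<gamma>" using a2 by simp
    moreover have "u * (n/2) = u * n - (n/2) * u" by simp
    ultimately show ?thesis using a1 by linarith
  qed
  then have "n/2 \<le> M * u powr (\<gamma> - 1)" using u by simp
  also have "\<dots> \<le> M * c" using uc M by (simp add: mult_left_mono)
  also have "\<dots> < (M + 1) * c" using c by simp
  also have "\<dots> = n/2" using M by (simp add: c_def field_simps)
  finally show False by simp
qed


lemma hball_Pts: "hball s d r x0 \<subseteq> Pts d"
  unfolding hball_def by auto

lemma germ_bound:
  assumes BB: "B = hball s d r x0" and xB: "x \<in> B" and G: "germ_sn s d \<gamma> B U \<le> ereal K"
    and g: "spatial_grad d U x (\<nu> x)" and \<gamma>: "1 < \<gamma>" and K: "0 \<le> K"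
    and yB: "y \<in> B" and yx: "fst y \<le> fst x"
  shows "\<bar>U x y - U x x - dotd d (\<nu> x) (snd y - snd x)\<bar> \<le> K * pdist s d x y powr \<gamma>"
proof (rule eps_limit)
  show "0 \<le> pdist s d x y powr \<gamma>" by simp
  fix \<epsilon> :: real assume \<epsilon>: "\<epsilon> > 0"
  have "(INF \<nu>\<in>Rd d. SUP y\<in>{y \<in> B. fst y \<le> fst x}.
        ereal (\<bar>U x y - U x x - (if \<gamma> > 1 then dotd d \<nu> (snd y - snd x) else 0)\<bar>
               / pdist s d x y powr \<gamma>)) \<le> germ_sn s d \<gamma> B U"
    unfolding germ_sn_def using xB by (rule SUP_upper)
  also have "\<dots> < ereal (K + \<epsilon>)"
  proof -
    have "ereal K < ereal (K + \<epsilon>)" using \<epsilon> by simp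
    then show ?thesis by (rule le_less_trans[OF G])
  qed
  finally have "\<exists>\<nu>'\<in>Rd d. (SUP y\<in>{y \<in> B. fst y \<le> fst x}.
        ereal (\<bar>U x y - U x x - (if \<gamma> > 1 then dotd d \<nu>' (snd y - snd x) else 0)\<bar>
               / pdist s d x y powr \<gamma>)) < ereal (K + \<epsilon>)"
    by (simp only: INF_less_iff)
  then obtain \<nu>' where v': "\<nu>' \<in> Rd d" and
    S: "(SUP y\<in>{y \<in> B. fst y \<le> fst x}.
        ereal (\<bar>U x y - U x x - (if \<gamma> > 1 then dotd d \<nu>' (snd y - snd x) else 0)\<bar>
               / pdist s d x y powr \<gamma>)) < ereal (K + \<epsilon>)"
    by blast
  have bd': "\<bar>U x z - U x x - dotd d \<nu>' (snd z - snd x)\<bar> \<le> (K + \<epsilon>) * pdist s d x z powr \<gamma>"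
    if zB: "z \<in> B" and zx: "fst z \<le> fst x" for z
  proof -
    have "ereal (\<bar>U x z - U x x - (if \<gamma> > 1 then dotd d \<nu>' (snd z - snd x) else 0)\<bar>
               / pdist s d x z powr \<gamma>) \<le> (SUP y\<in>{y \<in> B. fst y \<le> fst x}.
        ereal (\<bar>U x y - U x x - (if \<gamma> > 1 then dotd d \<nu>' (snd y - snd x) else 0)\<bar>
               / pdist s d x y powr \<gamma>))"
      using zB zx by (intro SUP_upper) auto
    from le_less_trans[OF this S]
    have R: "\<bar>U x z - U x x - dotd d \<nu>' (snd z - snd x)\<bar> / pdist s d x z powr \<gamma> \<le> K + \<epsilon>"
      using \<gamma> by simp
    show ?thesis
    proof (cases "pdist s d x z = 0")
      case True
      have "x \<in> Pts d" "z \<in> Pts d" using xB zB hball_Pts[of s d r x0] BB by auto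
      then have "x = z" using pdist_zero_eq[of x d z s] True by simp
      then show ?thesis by (simp add: dotd_def pdist_self)
    next
      case False
      then have "pdist s d x z powr \<gamma> > 0" using pdist_nonneg[of s d x z] by simp
      then show ?thesis using R by (simp add: pos_divide_le_eq)
    qed
  qed
  have xB': "x \<in> hball s d r x0" using xB BB by simp
  have xR: "snd x \<in> Rd d" using xB' unfolding hball_iff by simp
  have "normd d (\<nu> x - \<nu>') = 0"
  proof (rule grad_unique[OF xB' g v' \<gamma>])
    show "0 \<le> K + \<epsilon>" using K \<epsilon> by simp
    fix h assume hR: "h \<in> Rd d" and hn: "normd d (snd x + h - snd x0) < r"
    have zB: "(fst x, snd x + h) \<in> B" using xB' hR hn xR Rd_add unfolding BB hball_iff by auto
    show "\<bar>U x (fst x, snd x + h) - U x x - dotd d \<nu>' h\<bar> \<le> (K + \<epsilon>) * normd d h powr \<gamma>"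
      using bd'[OF zB] pdist_same_time[of s d x h] by simp
  qed
  then have "dotd d (\<nu> x) (snd y - snd x) = dotd d \<nu>' (snd y - snd x)"
    using dotd_zero_norm[of d "\<nu> x - \<nu>'" "snd y - snd x"] by (simp add: dotd_diff_left)
  then show "\<bar>U x y - U x x - dotd d (\<nu> x) (snd y - snd x)\<bar> \<le> (K + \<epsilon>) * pdist s d x y powr \<gamma>"
    using bd'[OF yB yx] by simp
qed

lemma Inf_ereal_set_less: "Inf {ereal C | C. Q C} < ereal t \<Longrightarrow> \<exists>C. Q C \<and> C < t"
  by (auto simp: Inf_less_iff)

lemma three_bound:
  assumes T: "three_pt_sn s d \<gamma> A B U \<Lambda> \<le> ereal T"
    and xyz: "x \<in> B" "y \<in> B" "z \<in> B" "fst z \<le> fst y" "fst y \<le> fst x"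
  shows "\<bar>U x z - U x y - U y z + U y y + dotd d (\<Lambda> x y) (snd z - snd y)\<bar>
          \<le> T * (\<Sum>\<beta>\<in>A. pdist s d x y powr \<beta> * pdist s d y z powr (\<gamma> - \<beta>))"
proof (rule eps_limit)
  show "0 \<le> (\<Sum>\<beta>\<in>A. pdist s d x y powr \<beta> * pdist s d y z powr (\<gamma> - \<beta>))"
    by (intro sum_nonneg) simp
  fix \<epsilon> :: real assume \<epsilon>: "\<epsilon> > 0"
  have "three_pt_sn s d \<gamma> A B U \<Lambda> < ereal (T + \<epsilon>)"
  proof -
    have "ereal T < ereal (T + \<epsilon>)" using \<epsilon> by simp
    then show ?thesis by (rule le_less_trans[OF T])
  qed
  then have ex: "\<exists>C. (0 \<le> C \<and> (\<forall>x\<in>B. \<forall>y\<in>B. \<forall>z\<in>B. fst z \<le> fst y \<and> fst y \<le> fst x \<longrightarrow>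
        \<bar>U x z - U x y - U y z + U y y + dotd d (\<Lambda> x y) (snd z - snd y)\<bar>
          \<le> C * (\<Sum>\<beta>\<in>A. pdist s d x y powr \<beta> * pdist s d y z powr (\<gamma> - \<beta>)))) \<and> C < T + \<epsilon>"
    unfolding three_pt_sn_def by (rule Inf_ereal_set_less)
  obtain C where CC: "(0 \<le> C \<and> (\<forall>x\<in>B. \<forall>y\<in>B. \<forall>z\<in>B. fst z \<le> fst y \<and> fst y \<le> fst x \<longrightarrow>
        \<bar>U x z - U x y - U y z + U y y + dotd d (\<Lambda> x y) (snd z - snd y)\<bar>
          \<le> C * (\<Sum>\<beta>\<in>A. pdist s d x y powr \<beta> * pdist s d y z powr (\<gamma> - \<beta>)))) \<and> C < T + \<epsilon>"
    using ex by (rule exE) (rule that)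
  have H: "\<forall>x\<in>B. \<forall>y\<in>B. \<forall>z\<in>B. fst z \<le> fst y \<and> fst y \<le> fst x \<longrightarrow>
        \<bar>U x z - U x y - U y z + U y y + dotd d (\<Lambda> x y) (snd z - snd y)\<bar>
          \<le> C * (\<Sum>\<beta>\<in>A. pdist s d x y powr \<beta> * pdist s d y z powr (\<gamma> - \<beta>))" using CC by (rule conjunct2[OF conjunct1])
  have alt: "C < T + \<epsilon>" using CC by (rule conjunct2)
  have C0: "0 \<le> C" using CC by (rule conjunct1[OF conjunct1])
  have CT: "C \<le> T + \<epsilon>" using alt by simp
  have "0 \<le> (\<Sum>\<beta>\<in>A. pdist s d x y powr \<beta> * pdist s d y z powr (\<gamma> - \<beta>))"
    by (intro sum_nonneg) simp
  then show "\<bar>U x z - U x y - U y z + U y y + dotd d (\<Lambda> x y) (snd z - snd y)\<bar>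
          \<le> (T + \<epsilon>) * (\<Sum>\<beta>\<in>A. pdist s d x y powr \<beta> * pdist s d y z powr (\<gamma> - \<beta>))"
  proof -
    have "\<bar>U x z - U x y - U y z + U y y + dotd d (\<Lambda> x y) (snd z - snd y)\<bar>
          \<le> C * (\<Sum>\<beta>\<in>A. pdist s d x y powr \<beta> * pdist s d y z powr (\<gamma> - \<beta>))"
      by (rule H[rule_format, OF xyz(1,2,3) conjI[OF xyz(4,5)]])
    also have "\<dots> \<le> (T + \<epsilon>) * (\<Sum>\<beta>\<in>A. pdist s d x y powr \<beta> * pdist s d y z powr (\<gamma> - \<beta>))"
      using CT \<open>0 \<le> (\<Sum>\<beta>\<in>A. pdist s d x y powr \<beta> * pdist s d y z powr (\<gamma> - \<beta>))\<close>
      by (rule mult_right_mono)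
    finally show ?thesis .
  qed
qed


lemma rho_le:
  assumes s: "0 < s" and r: "0 < r" and xB: "x \<in> hball s d r x0" and yB: "y \<in> hball s d r x0"
  shows "pdist s d x y \<le> 2 * r"
proof -
  have tx: "fst x0 - r powr (2 * s) < fst x" "fst x \<le> fst x0"
    and ty: "fst x0 - r powr (2 * s) < fst y" "fst y \<le> fst x0"
    and nx: "normd d (snd x - snd x0) < r" and ny: "normd d (snd y - snd x0) < r"
    using xB yB unfolding hball_iff by auto
  have "\<bar>fst x - fst y\<bar> \<le> r powr (2 * s)" using tx ty by linarith
  then have "\<bar>fst x - fst y\<bar> powr (1 / (2 * s)) \<le> (r powr (2 * s)) powr (1 / (2 * s))"
    using s by (intro powr_mono2) auto
  also have "\<dots> = r" using s r by (simp add: powr_powr)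
  finally have a: "\<bar>fst x - fst y\<bar> powr (1 / (2 * s)) \<le> 2 * r" using r by simp
  have e: "snd x - snd y = (snd x - snd x0) - (snd y - snd x0)" by (simp add: fun_eq_iff)
  have "normd d (snd x - snd y) \<le> normd d (snd x - snd x0) + normd d (snd y - snd x0)"
    unfolding e by (rule normd_diff)
  then have b: "normd d (snd x - snd y) \<le> 2 * r" using nx ny by simp
  show ?thesis unfolding pdist_def using a b by simp
qed

lemma main_est:
  fixes M :: real
  assumes s: "1/2 < s" "s < 1" and \<gamma>: "1 < \<gamma>" "\<gamma> < 2 * s" and r: "0 < r"
    and BB: "B = hball s d r x0" and x0: "x0 \<in> Pts d"
    and A: "finite A" "A \<subseteq> {0<..<\<gamma>}" and T: "0 \<le> T" and K: "0 \<le> K"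
    and germ: "\<And>x y. x \<in> B \<Longrightarrow> y \<in> B \<Longrightarrow> fst y \<le> fst x \<Longrightarrow>
        \<bar>U x y - U x x - dotd d (\<nu> x) (snd y - snd x)\<bar> \<le> K * pdist s d x y powr \<gamma>"
    and three: "\<And>x y z. x \<in> B \<Longrightarrow> y \<in> B \<Longrightarrow> z \<in> B \<Longrightarrow> fst z \<le> fst y \<Longrightarrow> fst y \<le> fst x \<Longrightarrow>
        \<bar>U x z - U x y - U y z + U y y + dotd d (\<Lambda> x y) (snd z - snd y)\<bar>
          \<le> T * (\<Sum>\<beta>\<in>A. pdist s d x y powr \<beta> * pdist s d y z powr (\<gamma> - \<beta>))"
    and \<nu>R: "\<And>x. x \<in> B \<Longrightarrow> \<nu> x \<in> Rd d" and \<Lambda>R: "\<And>x y. x \<in> B \<Longrightarrow> y \<in> B \<Longrightarrow> \<Lambda> x y \<in> Rd d"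
    and xB: "x \<in> B" and yB: "y \<in> B" and yx: "fst y \<le> fst x" and \<rho>: "0 < pdist s d x y"
    and Mdef: "M = T * real (card A) + 6 * K"
  shows "normd d (\<nu> y - \<nu> x - \<Lambda> x y) \<le> 8 * M * pdist s d x y powr (\<gamma> - 1)"
proof -
  define \<rho> where "\<rho> = pdist s d x y"
  define v where "v = \<nu> y - \<nu> x - \<Lambda> x y"
  define c0 where "c0 = snd x0"
  have M0: "0 \<le> M" using T K Mdef by simp
  have \<rho>0: "0 < \<rho>" using \<rho> by (simp add: \<rho>_def)
  have \<gamma>2: "\<gamma> \<le> 2" using \<gamma> s by simp
  have xB': "x \<in> hball s d r x0" and yB': "y \<in> hball s d r x0" using xB yB BB by auto
  have yR: "snd y \<in> Rd d" and ny: "normd d (snd y - c0) < r" and ty: "fst x0 - r powr (2 * s) < fst y" "fst y \<le> fst x0"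
    using yB' unfolding hball_iff c0_def by auto
  have c0R: "c0 \<in> Rd d" using x0 unfolding Pts_def c0_def by auto
  have vR: "v \<in> Rd d" unfolding v_def using \<nu>R[OF xB] \<nu>R[OF yB] \<Lambda>R[OF xB yB] by (intro Rd_diff)
  have key: "\<bar>dotd d v h\<bar> \<le> M * \<rho> powr \<gamma>"
    if hR: "h \<in> Rd d" and hn: "normd d h \<le> \<rho>" and hb: "normd d (snd y + h - c0) < r" for h
  proof -
    define z where "z = (fst y, snd y + h)"
    have zB: "z \<in> B" unfolding BB z_def hball_iff using ty hb Rd_add[OF yR hR] by (simp add: c0_def)
    have zy: "fst z \<le> fst y" by (simp add: z_def)
    have zx: "fst z \<le> fst x" using yx by (simp add: z_def)
    have dyz: "pdist s d y z = normd d h" unfolding z_def by (rule pdist_same_time)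
    have szy: "snd z - snd y = h" by (simp add: z_def fun_eq_iff)
    have szx: "snd z - snd x = (snd y - snd x) + h" by (simp add: z_def fun_eq_iff)
    have E3: "\<bar>U x z - U x y - U y z + U y y + dotd d (\<Lambda> x y) h\<bar>
          \<le> T * (\<Sum>\<beta>\<in>A. \<rho> powr \<beta> * normd d h powr (\<gamma> - \<beta>))"
      using three[OF xB yB zB zy yx] unfolding szy dyz \<rho>_def .
    have "(\<Sum>\<beta>\<in>A. \<rho> powr \<beta> * normd d h powr (\<gamma> - \<beta>)) \<le> real (card A) * \<rho> powr \<gamma>"
    proof (rule sum_bounded_above)
      fix \<beta> assume "\<beta> \<in> A"
      then have b: "0 < \<beta>" "\<beta> < \<gamma>" using A by auto
      have "normd d h powr (\<gamma> - \<beta>) \<le> \<rho> powr (\<gamma> - \<beta>)"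
        using hn b normd_nonneg[of d h] by (intro powr_mono2) auto
      then have "\<rho> powr \<beta> * normd d h powr (\<gamma> - \<beta>) \<le> \<rho> powr \<beta> * \<rho> powr (\<gamma> - \<beta>)"
        by (intro mult_left_mono) auto
      also have "\<dots> = \<rho> powr \<gamma>" by (simp add: powr_add[symmetric])
      finally show "\<rho> powr \<beta> * normd d h powr (\<gamma> - \<beta>) \<le> \<rho> powr \<gamma>" .
    qed
    then have E3': "\<bar>U x z - U x y - U y z + U y y + dotd d (\<Lambda> x y) h\<bar> \<le> T * real (card A) * \<rho> powr \<gamma>"
      using E3 T by (metis (no_types, lifting) mult.assoc mult_left_mono order_trans)
    have dxz: "pdist s d x z \<le> 2 * \<rho>"
    proof -
      have a: "\<bar>fst x - fst z\<bar> powr (1 / (2 * s)) \<le> \<rho>"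
        unfolding \<rho>_def pdist_def by (simp add: z_def)
      have e: "snd x - snd z = (snd x - snd y) - h" by (simp add: z_def fun_eq_iff)
      have "normd d (snd x - snd z) \<le> normd d (snd x - snd y) + normd d h"
        unfolding e by (rule normd_diff)
      also have "normd d (snd x - snd y) \<le> \<rho>" unfolding \<rho>_def pdist_def by simp
      finally have b: "normd d (snd x - snd z) \<le> 2 * \<rho>" using hn by simp
      show ?thesis unfolding pdist_def using a b \<rho>0 by simp
    qed
    have "pdist s d x z powr \<gamma> \<le> (2 * \<rho>) powr \<gamma>"
      using dxz pdist_nonneg[of s d x z] \<gamma> by (intro powr_mono2) auto
    also have "\<dots> = 2 powr \<gamma> * \<rho> powr \<gamma>" using \<rho>0 by (simp add: powr_mult)
    also have "\<dots> \<le> 4 * \<rho> powr \<gamma>"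
    proof -
      have "2 powr \<gamma> \<le> 2 powr (2::real)" using \<gamma>2 by (intro powr_mono) auto
      then have "2 powr \<gamma> \<le> 4" by simp
      then show ?thesis by (intro mult_right_mono) auto
    qed
    finally have pxz: "pdist s d x z powr \<gamma> \<le> 4 * \<rho> powr \<gamma>" .
    have E1: "\<bar>U x z - U x x - dotd d (\<nu> x) (snd z - snd x)\<bar> \<le> K * (4 * \<rho> powr \<gamma>)"
      using germ[OF xB zB zx] pxz K by (meson mult_left_mono order_trans)
    have E2: "\<bar>U x y - U x x - dotd d (\<nu> x) (snd y - snd x)\<bar> \<le> K * \<rho> powr \<gamma>"
      using germ[OF xB yB yx] unfolding \<rho>_def .
    have "normd d h powr \<gamma> \<le> \<rho> powr \<gamma>"
      using hn normd_nonneg[of d h] \<gamma> by (intro powr_mono2) auto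
    then have E4: "\<bar>U y z - U y y - dotd d (\<nu> y) h\<bar> \<le> K * \<rho> powr \<gamma>"
      using germ[OF yB zB zy] K unfolding szy dyz by (meson mult_left_mono order_trans)
    have l1: "dotd d (\<nu> x) (snd z - snd x) = dotd d (\<nu> x) (snd y - snd x) + dotd d (\<nu> x) h"
      unfolding szx by (rule dotd_add_right)
    have l2: "dotd d v h = dotd d (\<nu> y) h - dotd d (\<nu> x) h - dotd d (\<Lambda> x y) h"
      unfolding v_def by (simp add: dotd_diff_left)
    have "\<bar>dotd d v h\<bar> \<le> T * real (card A) * \<rho> powr \<gamma> + K * (4 * \<rho> powr \<gamma>) + K * \<rho> powr \<gamma> + K * \<rho> powr \<gamma>"
      using E1 E2 E3' E4 l1 l2 by linarith
    also have "\<dots> = M * \<rho> powr \<gamma>" unfolding Mdef by (simp add: algebra_simps)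
    finally show ?thesis .
  qed
  have \<rho>2r: "\<rho> \<le> 2 * r" unfolding \<rho>_def using rho_le[OF _ r xB' yB'] s by simp
  show ?thesis
  proof (cases "normd d v = 0")
    case True
    then show ?thesis using M0 unfolding v_def by simp
  next
    case False
    define nv where "nv = normd d v"
    have nv: "0 < nv" using False normd_nonneg[of d v] unfolding nv_def by simp
    define lam where "lam = \<rho> / (2 * r)"
    have lam: "0 < lam" "lam \<le> 1" using \<rho>0 r \<rho>2r by (auto simp: lam_def)
    define h0 where "h0 = (\<lambda>i. lam * (c0 i - snd y i))"
    define w where "w = (\<lambda>i. (\<rho> / 4 / nv) * v i)"
    have h0R: "h0 \<in> Rd d" using c0R yR unfolding h0_def Rd_def by auto
    have wR: "w \<in> Rd d" using vR unfolding w_def by (rule Rd_scale)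
    have h1R: "h0 + w \<in> Rd d" using h0R wR by (rule Rd_add)
    have e0: "h0 = (\<lambda>i. lam * (c0 - snd y) i)" by (simp add: h0_def)
    have "normd d h0 = lam * normd d (c0 - snd y)" unfolding e0 normd_scale using lam(1) by (simp only: abs_of_pos)
    also have "normd d (c0 - snd y) = normd d (snd y - c0)" by (rule normd_minus_commute)
    finally have nh0: "normd d h0 = lam * normd d (snd y - c0)" .
    have nh0': "normd d h0 \<le> \<rho> / 2"
    proof -
      have "normd d h0 \<le> lam * r" unfolding nh0 using ny lam by (intro mult_left_mono) auto
      also have "\<dots> = \<rho> / 2" using r by (simp add: lam_def)
      finally show ?thesis .
    qed
    have nw: "normd d w = \<rho> / 4" unfolding w_def normd_scale nv_def[symmetric] using nv \<rho>0 by simp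
    have nh1: "normd d (h0 + w) \<le> \<rho>" using normd_add[of d h0 w] nh0' nw \<rho>0 by simp
    have e1: "snd y + h0 - c0 = (\<lambda>i. (1 - lam) * (snd y - c0) i)" by (simp add: h0_def fun_eq_iff algebra_simps)
    have nb0: "normd d (snd y + h0 - c0) = (1 - lam) * normd d (snd y - c0)"
      unfolding e1 normd_scale using lam(2) by (simp only: abs_of_nonneg diff_ge_0_iff_ge)
    have b0: "normd d (snd y + h0 - c0) < r"
    proof -
      have "(1 - lam) * normd d (snd y - c0) \<le> normd d (snd y - c0)"
        using mult_nonneg_nonneg[of lam "normd d (snd y - c0)"] lam normd_nonneg[of d "snd y - c0"]
        by (simp add: left_diff_distrib)
      then show ?thesis using nb0 ny by simp
    qed
    have b1: "normd d (snd y + (h0 + w) - c0) < r"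
    proof -
      have e: "snd y + (h0 + w) - c0 = (snd y + h0 - c0) + w" by (simp add: fun_eq_iff)
      have "normd d (snd y + (h0 + w) - c0) \<le> (1 - lam) * normd d (snd y - c0) + \<rho> / 4"
        using normd_add[of d "snd y + h0 - c0" w] unfolding e nb0 nw .
      also have "\<dots> \<le> (1 - lam) * r + \<rho> / 4"
        using lam ny by (intro add_right_mono mult_left_mono) auto
      also have "\<dots> < r" using r lam by (simp add: lam_def field_simps)
      finally show ?thesis .
    qed
    have k0: "\<bar>dotd d v h0\<bar> \<le> M * \<rho> powr \<gamma>" using key[OF h0R _ b0] nh0' \<rho>0 by simp
    have k1: "\<bar>dotd d v (h0 + w)\<bar> \<le> M * \<rho> powr \<gamma>" using key[OF h1R nh1 b1] .
    have "dotd d v w = (\<rho> / 4 / nv) * nv^2" unfolding w_def dotd_scale_right dotd_self nv_def ..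
    also have "\<dots> = (\<rho> / 4) * nv" using nv by (simp add: power2_eq_square)
    finally have vw: "dotd d v w = (\<rho> / 4) * nv" .
    have "(\<rho> / 4) * nv \<le> 2 * M * \<rho> powr \<gamma>"
      using k0 k1 vw dotd_add_right[of d v h0 w] by linarith
    also have "\<rho> powr \<gamma> = \<rho> * \<rho> powr (\<gamma> - 1)"
    proof -
      have "\<rho> powr \<gamma> = \<rho> powr (1 + (\<gamma> - 1))" by simp
      also have "\<dots> = \<rho> powr 1 * \<rho> powr (\<gamma> - 1)" by (rule powr_add)
      also have "\<dots> = \<rho> * \<rho> powr (\<gamma> - 1)" using \<rho>0 by simp
      finally show ?thesis .
    qed
    finally have "\<rho> * (nv / 4) \<le> \<rho> * (2 * M * \<rho> powr (\<gamma> - 1))" by (simp add: algebra_simps)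
    then have "nv / 4 \<le> 2 * M * \<rho> powr (\<gamma> - 1)" using \<rho>0 by simp
    then show ?thesis unfolding nv_def v_def \<rho>_def by simp
  qed
qed


lemma lam_diag:
  assumes r: "0 < r" and BB: "B = hball s d r x0" and xB: "x \<in> B"
    and three: "\<And>x y z. x \<in> B \<Longrightarrow> y \<in> B \<Longrightarrow> z \<in> B \<Longrightarrow> fst z \<le> fst y \<Longrightarrow> fst y \<le> fst x \<Longrightarrow>
        \<bar>U x z - U x y - U y z + U y y + dotd d (\<Lambda> x y) (snd z - snd y)\<bar>
          \<le> T * (\<Sum>\<beta>\<in>A. pdist s d x y powr \<beta> * pdist s d y z powr (\<gamma> - \<beta>))"
    and LR: "\<Lambda> x x \<in> Rd d"
  shows "normd d (\<Lambda> x x) = 0"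
proof (rule ccontr)
  define L where "L = \<Lambda> x x"
  define nL where "nL = normd d L"
  assume "normd d (\<Lambda> x x) \<noteq> 0"
  then have nL: "0 < nL" using normd_nonneg[of d L] unfolding nL_def L_def by simp
  have xB': "x \<in> hball s d r x0" using xB BB by simp
  have xR: "snd x \<in> Rd d" and tx: "fst x0 - r powr (2 * s) < fst x" "fst x \<le> fst x0"
    and nx: "normd d (snd x - snd x0) < r" using xB' unfolding hball_iff by auto
  define room where "room = r - normd d (snd x - snd x0)"
  have room: "0 < room" using nx by (simp add: room_def)
  define e where "e = room / (2 * (nL + 1))"
  have e: "0 < e" using room nL by (simp add: e_def)
  define h where "h = (\<lambda>i. e * L i)"
  have hR: "h \<in> Rd d" unfolding h_def using LR unfolding L_def by (rule Rd_scale)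
  have nh: "normd d h = e * nL" unfolding h_def normd_scale nL_def using e by simp
  have "e * nL < room"
  proof -
    have "e * nL \<le> e * (nL + 1)" using e by simp
    also have "\<dots> = room / 2" using nL by (simp add: e_def field_simps)
    finally show ?thesis using room by simp
  qed
  define z where "z = (fst x, snd x + h)"
  have zB: "z \<in> B"
  proof -
    have eq: "snd x + h - snd x0 = (snd x - snd x0) + h" by (simp add: fun_eq_iff)
    have "normd d (snd x + h - snd x0) \<le> normd d (snd x - snd x0) + normd d h"
      unfolding eq by (rule normd_add)
    then have "normd d (snd x + h - snd x0) < r" using nh \<open>e * nL < room\<close> by (simp add: room_def)
    then show ?thesis unfolding BB z_def hball_iff using tx Rd_add[OF xR hR] by simp
  qed
  have szx: "snd z - snd x = h" by (simp add: z_def fun_eq_iff)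
  have "\<bar>U x z - U x x - U x z + U x x + dotd d (\<Lambda> x x) (snd z - snd x)\<bar>
          \<le> T * (\<Sum>\<beta>\<in>A. pdist s d x x powr \<beta> * pdist s d x z powr (\<gamma> - \<beta>))"
    using three[OF xB xB zB] by (simp add: z_def)
  then have "dotd d L h = 0" unfolding szx pdist_self L_def by simp
  moreover have "dotd d L h = e * nL^2" unfolding h_def dotd_scale_right dotd_self nL_def ..
  ultimately show False using e nL by simp
qed

lemma germ_nonneg:
  assumes "x0 \<in> B"
  shows "0 \<le> germ_sn s d \<gamma> B U"
proof -
  have "0 \<le> (INF \<nu>\<in>Rd d. SUP y\<in>{y \<in> B. fst y \<le> fst x0}.
        ereal (\<bar>U x0 y - U x0 x0 - (if \<gamma> > 1 then dotd d \<nu> (snd y - snd x0) else 0)\<bar>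
               / pdist s d x0 y powr \<gamma>))"
  proof (rule INF_greatest)
    fix \<nu> assume "\<nu> \<in> Rd d"
    have "x0 \<in> {y \<in> B. fst y \<le> fst x0}" using assms by simp
    moreover have "ereal (\<bar>U x0 x0 - U x0 x0 - (if \<gamma> > 1 then dotd d \<nu> (snd x0 - snd x0) else 0)\<bar>
               / pdist s d x0 x0 powr \<gamma>) = 0" by (simp add: dotd_def)
    ultimately show "0 \<le> (SUP y\<in>{y \<in> B. fst y \<le> fst x0}.
        ereal (\<bar>U x0 y - U x0 x0 - (if \<gamma> > 1 then dotd d \<nu> (snd y - snd x0) else 0)\<bar>
               / pdist s d x0 y powr \<gamma>))"
      by (metis (no_types, lifting) SUP_upper)
  qed
  also have "\<dots> \<le> germ_sn s d \<gamma> B U" unfolding germ_sn_def using assms by (rule SUP_upper)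
  finally show ?thesis .
qed

lemma three_nonneg: "0 \<le> three_pt_sn s d \<gamma> A B U \<Lambda>"
  unfolding three_pt_sn_def by (rule Inf_greatest) auto


theorem lemma3p9:
  fixes \<gamma> :: real and A :: "real set"
  assumes "1 < \<gamma>" and "finite A" and "A \<subseteq> {0<..<\<gamma>}"
  shows "\<exists>C>0. \<forall>(s::real) (d::nat) (r::real) (x0::pt) (B::pt set)
            (U::pt \<Rightarrow> pt \<Rightarrow> real) (\<nu>::pt \<Rightarrow> (nat \<Rightarrow> real)) (\<Lambda>::pt \<Rightarrow> pt \<Rightarrow> (nat \<Rightarrow> real)).
      1/2 < s \<and> s < 1 \<and> \<gamma> < 2 * s \<and> 0 < r \<and> x0 \<in> Pts d \<and> B = hball s d r x0
      \<and> germ_sn s d \<gamma> B U < \<infinity>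
      \<and> (\<forall>x\<in>B. spatial_grad d U x (\<nu> x))
      \<and> (\<forall>x\<in>B. \<forall>y\<in>B. \<Lambda> x y \<in> Rd d)
      \<and> three_pt_sn s d \<gamma> A B U \<Lambda> < \<infinity>
      \<longrightarrow> vgerm_sn s d (\<gamma> - 1) B (\<lambda>x y. \<nu> y - \<nu> x - \<Lambda> x y)
            \<le> ereal C * (three_pt_sn s d \<gamma> A B U \<Lambda> + germ_sn s d \<gamma> B U)"
proof (intro exI[of _ "8 * (real (card A) + 6)"] conjI allI impI)
  show "0 < 8 * (real (card A) + 6)" by simp
  fix s r :: real and d :: nat and x0 :: pt and B :: "pt set" and U :: "pt \<Rightarrow> pt \<Rightarrow> real"
    and \<nu> :: "pt \<Rightarrow> (nat \<Rightarrow> real)" and \<Lambda> :: "pt \<Rightarrow> pt \<Rightarrow> (nat \<Rightarrow> real)"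
  assume H: "1/2 < s \<and> s < 1 \<and> \<gamma> < 2 * s \<and> 0 < r \<and> x0 \<in> Pts d \<and> B = hball s d r x0
      \<and> germ_sn s d \<gamma> B U < \<infinity>
      \<and> (\<forall>x\<in>B. spatial_grad d U x (\<nu> x))
      \<and> (\<forall>x\<in>B. \<forall>y\<in>B. \<Lambda> x y \<in> Rd d)
      \<and> three_pt_sn s d \<gamma> A B U \<Lambda> < \<infinity>"
  then have s: "1/2 < s" "s < 1" and \<gamma>s: "\<gamma> < 2 * s" and r: "0 < r" and x0: "x0 \<in> Pts d"
    and BB: "B = hball s d r x0" and Gfin: "germ_sn s d \<gamma> B U < \<infinity>"
    and SG: "\<forall>x\<in>B. spatial_grad d U x (\<nu> x)" and LR: "\<forall>x\<in>B. \<forall>y\<in>B. \<Lambda> x y \<in> Rd d"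
    and Tfin: "three_pt_sn s d \<gamma> A B U \<Lambda> < \<infinity>"
    by blast+
  define C where "C = 8 * (real (card A) + 6)"
  have x0B: "x0 \<in> B"
  proof -
    have "0 < r powr (2 * s)" using r by simp
    moreover have "normd d (snd x0 - snd x0) = 0" by (simp add: normd_def dotd_def)
    ultimately show ?thesis unfolding BB hball_iff using x0 r unfolding Pts_def by auto
  qed
  obtain K where K: "germ_sn s d \<gamma> B U = ereal K"
    using Gfin germ_nonneg[OF x0B, of s d \<gamma> U] by (cases "germ_sn s d \<gamma> B U") auto
  have K0: "0 \<le> K" using germ_nonneg[OF x0B, of s d \<gamma> U] K by simp
  obtain T where T: "three_pt_sn s d \<gamma> A B U \<Lambda> = ereal T"
    using Tfin three_nonneg[of s d \<gamma> A B U \<Lambda>] by (cases "three_pt_sn s d \<gamma> A B U \<Lambda>") auto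
  have T0: "0 \<le> T" using three_nonneg[of s d \<gamma> A B U \<Lambda>] T by simp
  have germ: "\<And>x y. x \<in> B \<Longrightarrow> y \<in> B \<Longrightarrow> fst y \<le> fst x \<Longrightarrow>
        \<bar>U x y - U x x - dotd d (\<nu> x) (snd y - snd x)\<bar> \<le> K * pdist s d x y powr \<gamma>"
    using germ_bound[OF BB _ _ _ assms(1) K0] K SG by simp
  have three: "\<And>x y z. x \<in> B \<Longrightarrow> y \<in> B \<Longrightarrow> z \<in> B \<Longrightarrow> fst z \<le> fst y \<Longrightarrow> fst y \<le> fst x \<Longrightarrow>
        \<bar>U x z - U x y - U y z + U y y + dotd d (\<Lambda> x y) (snd z - snd y)\<bar>
          \<le> T * (\<Sum>\<beta>\<in>A. pdist s d x y powr \<beta> * pdist s d y z powr (\<gamma> - \<beta>))"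
    using three_bound[of s d \<gamma> A B U \<Lambda> T] T by simp
  have \<nu>R: "\<And>x. x \<in> B \<Longrightarrow> \<nu> x \<in> Rd d" using SG unfolding spatial_grad_def by blast
  have \<Lambda>R: "\<And>x y. x \<in> B \<Longrightarrow> y \<in> B \<Longrightarrow> \<Lambda> x y \<in> Rd d" using LR by blast
  have CTK: "8 * (T * real (card A) + 6 * K) \<le> C * (T + K)"
  proof -
    have "C * (T + K) = 8 * (T * real (card A) + 6 * K) + 8 * (real (card A) * K + 6 * T)"
      unfolding C_def by (simp add: algebra_simps)
    moreover have "0 \<le> 8 * (real (card A) * K + 6 * T)" using K0 T0 by simp
    ultimately show ?thesis by linarith
  qed
  have CTK0: "0 \<le> C * (T + K)" unfolding C_def using T0 K0 by simp
  have pt: "normd d ((\<lambda>x y. \<nu> y - \<nu> x - \<Lambda> x y) x y - (\<lambda>x y. \<nu> y - \<nu> x - \<Lambda> x y) x x)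
        / pdist s d x y powr (\<gamma> - 1) \<le> C * (T + K)"
    if xB: "x \<in> B" and yB: "y \<in> B" and yx: "fst y \<le> fst x" for x y
  proof (cases "pdist s d x y = 0")
    case True
    then show ?thesis using CTK0 by simp
  next
    case False
    then have \<rho>: "0 < pdist s d x y" using pdist_nonneg[of s d x y] by simp
    have e: "(\<lambda>x y. \<nu> y - \<nu> x - \<Lambda> x y) x y - (\<lambda>x y. \<nu> y - \<nu> x - \<Lambda> x y) x x
        = (\<nu> y - \<nu> x - \<Lambda> x y) + \<Lambda> x x" by (simp add: fun_eq_iff)
    have LD: "normd d (\<Lambda> x x) = 0"
      using lam_diag[OF r BB xB three \<Lambda>R[OF xB xB]] by simp
    have "normd d ((\<nu> y - \<nu> x - \<Lambda> x y) + \<Lambda> x x) \<le> normd d (\<nu> y - \<nu> x - \<Lambda> x y)"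
      using normd_add[of d "\<nu> y - \<nu> x - \<Lambda> x y" "\<Lambda> x x"] LD by simp
    also have "\<dots> \<le> 8 * (T * real (card A) + 6 * K) * pdist s d x y powr (\<gamma> - 1)"
      using main_est[OF s assms(1) \<gamma>s r BB x0 assms(2,3) T0 K0 germ three \<nu>R \<Lambda>R xB yB yx \<rho> refl] .
    also have "\<dots> \<le> C * (T + K) * pdist s d x y powr (\<gamma> - 1)"
      using CTK by (intro mult_right_mono) auto
    finally have "normd d ((\<nu> y - \<nu> x - \<Lambda> x y) + \<Lambda> x x) \<le> C * (T + K) * pdist s d x y powr (\<gamma> - 1)" .
    moreover have "0 < pdist s d x y powr (\<gamma> - 1)" using \<rho> by simp
    ultimately show ?thesis unfolding e by (simp add: pos_divide_le_eq)
  qed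
  have "vgerm_sn s d (\<gamma> - 1) B (\<lambda>x y. \<nu> y - \<nu> x - \<Lambda> x y) \<le> ereal (C * (T + K))"
    unfolding vgerm_sn_def
  proof (intro SUP_least)
    fix x y assume "x \<in> B" "y \<in> {y \<in> B. fst y \<le> fst x}"
    then show "ereal (normd d ((\<lambda>x y. \<nu> y - \<nu> x - \<Lambda> x y) x y - (\<lambda>x y. \<nu> y - \<nu> x - \<Lambda> x y) x x)
        / pdist s d x y powr (\<gamma> - 1)) \<le> ereal (C * (T + K))"
      using pt by simp
  qed
  also have "\<dots> = ereal C * (three_pt_sn s d \<gamma> A B U \<Lambda> + germ_sn s d \<gamma> B U)"
    unfolding T K by simp
  finally show "vgerm_sn s d (\<gamma> - 1) B (\<lambda>x y. \<nu> y - \<nu> x - \<Lambda> x y)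
            \<le> ereal (8 * (real (card A) + 6)) * (three_pt_sn s d \<gamma> A B U \<Lambda> + germ_sn s d \<gamma> B U)"
    unfolding C_def .
qed

end
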